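(* (a) Let $\mathbb{X}$ be a $0$-dimensional Polish space and $(C^\varepsilon_i)_{(\varepsilon,i)\in2\times\omega}$ a family of pairwise disjoint clopen subsets of $\mathbb{X}$; put $R:=\bigcup_{i\in\omega}C^0_i\times C^1_i$ and $Z:=\mathbb{X}\setminus\bigcup_{(\varepsilon,i)}C^\varepsilon_i$. Assume $Z\neq\emptyset$ and that no clopen set $D\subseteq\mathbb{X}$ meeting $Z$ satisfies $R\cap D^2=\emptyset$. Then there is no continuous $c:\mathbb{X}\to\omega$ with $c(x)\neq c(y)$ for all $(x,y)\in R$. (b) There exists a family of pairwise disjoint clopen subsets of $2^\omega$ indexed by $2\times\omega$ satisfying the hypotheses of (a). *)

theory Defs
  imports "HOL-Analysis.Analysis"
begin

text \<open>A family (C e i), indexed by 2 x omega (here: bool x nat, False = 0, True = 1),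
  in a topological space (the topology of the type).\<close>

definition relR :: "(bool \<Rightarrow> nat \<Rightarrow> 'a set) \<Rightarrow> ('a \<times> 'a) set" where
  "relR C = (\<Union>i. C False i \<times> C True i)"

definition setZ :: "(bool \<Rightarrow> nat \<Rightarrow> 'a set) \<Rightarrow> 'a set" where
  "setZ C = UNIV - (\<Union>e i. C e i)"

definition clopen_disjoint_family :: "(bool \<Rightarrow> nat \<Rightarrow> 'a::topological_space set) \<Rightarrow> bool" where
  "clopen_disjoint_family C \<longleftrightarrow>
     (\<forall>e i. open (C e i) \<and> closed (C e i)) \<and>
     (\<forall>e i e' j. (e, i) \<noteq> (e', j) \<longrightarrow> C e i \<inter> C e' j = {})"

definition good_family :: "(bool \<Rightarrow> nat \<Rightarrow> 'a::topological_space set) \<Rightarrow> bool" where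
  "good_family C \<longleftrightarrow>
     clopen_disjoint_family C \<and>
     setZ C \<noteq> {} \<and>
     (\<forall>D. open D \<and> closed D \<and> D \<inter> setZ C \<noteq> {} \<longrightarrow> relR C \<inter> (D \<times> D) \<noteq> {})"

end

theory Submission
  imports Defs
begin

definition CC :: "bool \<Rightarrow> nat \<Rightarrow> (nat \<Rightarrow> bool) set" where
  "CC e i = (\<Inter>j\<in>{..<i}. (\<lambda>x. x j) -` {False}) \<inter> (\<lambda>x. x i) -` {True} \<inter> (\<lambda>x. x (Suc i)) -` {e}"

lemma CC_iff: "x \<in> CC e i \<longleftrightarrow> (\<forall>j<i. \<not> x j) \<and> x i \<and> x (Suc i) = e"
  unfolding CC_def by auto

lemma proj_open: "open ((\<lambda>x::nat \<Rightarrow> bool. x j) -` {b})"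
  by (rule open_vimage) (auto simp: open_discrete)

lemma proj_closed: "closed ((\<lambda>x::nat \<Rightarrow> bool. x j) -` {b})"
  by (rule closed_vimage) (auto simp: discrete_imp_closed)

lemma CC_clopen: "clopen_disjoint_family CC"
  unfolding clopen_disjoint_family_def
proof (intro conjI allI impI)
  fix e :: bool and i :: nat
  show "open (CC e i)" unfolding CC_def
    by (intro open_Int open_INT) (auto intro: proj_open)
  show "closed (CC e i)" unfolding CC_def
    by (intro closed_Int closed_INT) (auto intro: proj_closed)
next
  fix e e' :: bool and i j :: nat assume ne: "(e, i) \<noteq> (e', j)"
  show "CC e i \<inter> CC e' j = {}"
  proof (rule ccontr)
    assume "CC e i \<inter> CC e' j \<noteq> {}"
    then obtain x where "x \<in> CC e i" "x \<in> CC e' j" by blast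
    then have a: "(\<forall>k<i. \<not> x k) \<and> x i \<and> x (Suc i) = e" "(\<forall>k<j. \<not> x k) \<and> x j \<and> x (Suc j) = e'"
      by (auto simp: CC_iff)
    show False
    proof (cases i j rule: linorder_cases)
      case less then show ?thesis using a by blast
    next
      case equal then show ?thesis using a ne by auto
    next
      case greater then show ?thesis using a by blast
    qed
  qed
qed

lemma CC_Z: "setZ CC = {\<lambda>_. False}"
proof
  show "{\<lambda>_. False} \<subseteq> setZ CC" unfolding setZ_def by (auto simp: CC_iff)
  show "setZ CC \<subseteq> {\<lambda>_. False}"
  proof
    fix x assume x: "x \<in> setZ CC"
    show "x \<in> {\<lambda>_. False}"
    proof (rule ccontr)
      assume "x \<notin> {\<lambda>_. False}"
      then obtain k where k: "x k" by auto
      define i where "i = (LEAST k. x k)"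
      have xi: "x i" using k unfolding i_def by (rule LeastI)
      have "\<forall>j<i. \<not> x j" unfolding i_def using not_less_Least by blast
      then have "x \<in> CC (x (Suc i)) i" using xi by (simp add: CC_iff)
      then show False using x unfolding setZ_def by blast
    qed
  qed
qed

lemma CC_good: "good_family CC"
  unfolding good_family_def
proof (intro conjI allI impI)
  show "clopen_disjoint_family CC" by (rule CC_clopen)
  show "setZ CC \<noteq> {}" by (simp add: CC_Z)
  fix D :: "(nat \<Rightarrow> bool) set"
  assume D: "open D \<and> closed D \<and> D \<inter> setZ CC \<noteq> {}"
  then have z: "(\<lambda>_. False) \<in> D" by (simp add: CC_Z)
  have "openin (product_topology (\<lambda>i. euclidean) UNIV) D"
    using D unfolding open_fun_def by auto
  from product_topology_open_contains_basis[OF this z]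
  obtain X where H: "(\<lambda>_. False) \<in> (\<Pi>\<^sub>E i\<in>UNIV. X i)" "finite {i. X i \<noteq> UNIV}"
      "(\<Pi>\<^sub>E i\<in>UNIV. X i) \<subseteq> D"
    by auto
  obtain n where n: "\<And>i. i \<ge> n \<Longrightarrow> X i = UNIV"
    using H(2) by (metis (mono_tags, lifting) finite_nat_set_iff_bounded_le mem_Collect_eq not_less_eq_eq)
  have inX: "y \<in> D" if "\<And>i. i < n \<Longrightarrow> \<not> y i" for y
  proof -
    have "y \<in> (\<Pi>\<^sub>E i\<in>UNIV. X i)"
    proof (simp add: PiE_iff, intro allI)
      fix i show "y i \<in> X i"
      proof (cases "i < n")
        case True
        then have "y i = False" using that by auto
        then show ?thesis using H(1) by (auto simp: PiE_iff)
      next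
        case False then show ?thesis using n by auto
      qed
    qed
    then show ?thesis using H(3) by blast
  qed
  define x where "x = (\<lambda>j::nat. j = n)"
  define y where "y = (\<lambda>j::nat. j = n \<or> j = Suc n)"
  have "x \<in> D" by (rule inX) (auto simp: x_def)
  moreover have "y \<in> D" by (rule inX) (auto simp: y_def)
  moreover have "(x, y) \<in> relR CC"
    unfolding relR_def by (auto simp: CC_iff x_def y_def)
  ultimately show "relR CC \<inter> (D \<times> D) \<noteq> {}" by blast
qed

theorem lemma3p2:
  shows "(\<forall>C :: bool \<Rightarrow> nat \<Rightarrow> 'a::polish_space set.
            (euclidean :: 'a topology) dim_le 0 \<and> good_family C \<longrightarrow>
            \<not> (\<exists>c :: 'a \<Rightarrow> nat. continuous_on UNIV c \<and>
                   (\<forall>(x, y) \<in> relR C. c x \<noteq> c y)))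
       \<and> (\<exists>C :: bool \<Rightarrow> nat \<Rightarrow> (nat \<Rightarrow> bool) set. good_family C)"
proof
  show "\<exists>C :: bool \<Rightarrow> nat \<Rightarrow> (nat \<Rightarrow> bool) set. good_family C" using CC_good by blast
  show "\<forall>C :: bool \<Rightarrow> nat \<Rightarrow> 'a::polish_space set.
            (euclidean :: 'a topology) dim_le 0 \<and> good_family C \<longrightarrow>
            \<not> (\<exists>c :: 'a \<Rightarrow> nat. continuous_on UNIV c \<and>
                   (\<forall>(x, y) \<in> relR C. c x \<noteq> c y))"
  proof (intro allI impI notI)
    fix C :: "bool \<Rightarrow> nat \<Rightarrow> 'a set"
    assume g: "euclidean dim_le 0 \<and> good_family C"
    assume "\<exists>c :: 'a \<Rightarrow> nat. continuous_on UNIV c \<and> (\<forall>(x, y) \<in> relR C. c x \<noteq> c y)"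
    then obtain c :: "'a \<Rightarrow> nat" where c: "continuous_on UNIV c" "\<forall>(x, y) \<in> relR C. c x \<noteq> c y"
      by blast
    from g have gf: "good_family C" by blast
    then obtain z where z: "z \<in> setZ C" unfolding good_family_def by blast
    define D where "D = c -` {c z}"
    have "open D" unfolding D_def by (rule open_vimage[OF _ c(1)]) (simp add: open_discrete)
    moreover have "closed D" unfolding D_def by (rule closed_vimage[OF _ c(1)]) (simp add: discrete_imp_closed)
    moreover have "D \<inter> setZ C \<noteq> {}" using z unfolding D_def by blast
    ultimately have "relR C \<inter> (D \<times> D) \<noteq> {}" using gf unfolding good_family_def by blast
    then obtain x y where "(x, y) \<in> relR C" "x \<in> D" "y \<in> D" by blast
    then show False using c(2) unfolding D_def by auto
  qed
qed

end
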